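(* Let $N\ge 1$, let $\gamma_1,\dots,\gamma_N>0$, let $G$ be an $N\times N$ complex Hermitian matrix and $F$ an $N\times N$ complex symmetric matrix. Define $\Gamma=\mathrm{diag}(\gamma_1,\dots,\gamma_N,\gamma_1,\dots,\gamma_N)$, $$\mathcal{M}=\begin{pmatrix}\mathrm{Im}[G+F] & \mathrm{Re}[G-F]\\ -\mathrm{Re}[G+F] & -\mathrm{Im}[G+F]^{\mathrm T}\end{pmatrix},\qquad \mathbb{J}=\begin{pmatrix}0 & I\\ -I & 0\end{pmatrix},$$ with $I$ the $N\times N$ identity, and assume $\mathrm{i}\omega\mathbb{I}+\Gamma-\mathcal{M}$ is invertible for all $\omega\in\mathbb{R}$ ($\mathbb{I}$ the $2N\times2N$ identity). Let $S(\omega)=\sqrt{2\Gamma}\,(\mathrm{i}\omega\mathbb{I}+\Gamma-\mathcal{M})^{-1}\sqrt{2\Gamma}-\mathbb{I}$. Then $\mathcal{M}$ is a Hamiltonian matrix, i.e. $(\mathbb{J}\mathcal{M})^{\mathrm T}=\mathbb{J}\mathcal{M}$, $\Gamma$ is skew-Hamiltonian, i.e. $(\mathbb{J}\Gamma)^{\mathrm T}=-\mathbb{J}\Gamma$, and for every $\omega\in\mathbb{R}$ the matrix $S(\omega)$ is conjugate-symplectic: $S(\omega)\,\mathbb{J}\,S(\omega)^\dagger=\mathbb{J}$.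
   Context: $\mathrm{Re}$, $\mathrm{Im}$ are entrywise; ${}^{\mathrm T}$ is transpose and ${}^\dagger$ is conjugate transpose; $\sqrt{2\Gamma}$ is the entrywise square root of the diagonal matrix $2\Gamma$. *)

theory Defs
  imports "HOL-Analysis.Analysis"
begin

text \<open>Index type for 2N x 2N matrices: 'n + 'n, where Inl i is the i-th index of the first
block (1..N) and Inr i the i-th index of the second block (N+1..2N).\<close>

definition block_mat ::
  "'a^'n::finite^'n \<Rightarrow> 'a^'n^'n \<Rightarrow> 'a^'n^'n \<Rightarrow> 'a^'n^'n \<Rightarrow> 'a^('n+'n)^('n+'n)" where
  "block_mat A B C D = (\<chi> i j. (case i of
      Inl a \<Rightarrow> (case j of Inl b \<Rightarrow> A$a$b | Inr b \<Rightarrow> B$a$b)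
    | Inr a \<Rightarrow> (case j of Inl b \<Rightarrow> C$a$b | Inr b \<Rightarrow> D$a$b)))"

definition Re_mat :: "complex^'n^'m \<Rightarrow> real^'n^'m" where
  "Re_mat A = (\<chi> i j. Re (A$i$j))"

definition Im_mat :: "complex^'n^'m \<Rightarrow> real^'n^'m" where
  "Im_mat A = (\<chi> i j. Im (A$i$j))"

definition cmat :: "real^'n^'m \<Rightarrow> complex^'n^'m" where
  "cmat A = (\<chi> i j. complex_of_real (A$i$j))"

definition conj_transpose :: "complex^'n^'m \<Rightarrow> complex^'m^'n" where
  "conj_transpose A = (\<chi> i j. cnj (A$j$i))"

definition hermitian_mat :: "complex^'n^'n \<Rightarrow> bool" where
  "hermitian_mat A \<longleftrightarrow> conj_transpose A = A"

definition idx :: "'n::finite + 'n \<Rightarrow> 'n" where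
  "idx k = (case k of Inl a \<Rightarrow> a | Inr a \<Rightarrow> a)"

definition Gamma_mat :: "('n::finite \<Rightarrow> real) \<Rightarrow> real^('n+'n)^('n+'n)" where
  "Gamma_mat \<gamma> = (\<chi> i j. if i = j then \<gamma> (idx i) else 0)"

definition sqrt2Gamma_mat :: "('n::finite \<Rightarrow> real) \<Rightarrow> real^('n+'n)^('n+'n)" where
  "sqrt2Gamma_mat \<gamma> = (\<chi> i j. sqrt (2 * (Gamma_mat \<gamma>)$i$j))"

definition M_mat :: "complex^'n::finite^'n \<Rightarrow> complex^'n^'n \<Rightarrow> real^('n+'n)^('n+'n)" where
  "M_mat G F = block_mat (Im_mat (G + F)) (Re_mat (G - F))
                         (- Re_mat (G + F)) (- transpose (Im_mat (G + F)))"

definition J_mat :: "real^('n::finite+'n)^('n+'n)" where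
  "J_mat = block_mat 0 (mat 1) (- mat 1) 0"

definition S_mat :: "('n::finite \<Rightarrow> real) \<Rightarrow> complex^'n^'n \<Rightarrow> complex^'n^'n \<Rightarrow> real \<Rightarrow> complex^('n+'n)^('n+'n)" where
  "S_mat \<gamma> G F \<omega> =
     cmat (sqrt2Gamma_mat \<gamma>) **
       matrix_inv (mat (\<i> * complex_of_real \<omega>) + cmat (Gamma_mat \<gamma>) - cmat (M_mat G F)) **
     cmat (sqrt2Gamma_mat \<gamma>) - mat 1"

end

theory Submission imports Defs begin

lemma sum_UNIV_Plus: "sum f (UNIV::('a::finite+'b::finite) set) = sum (f o Inl) UNIV + sum (f o Inr) UNIV"
  by (metis UNIV_Plus_UNIV sum.Plus finite)

lemma block_mult:
  fixes A B C D A' B' C' D' :: "'a::semiring_1^'n::finite^'n"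
  shows "block_mat A B C D ** block_mat A' B' C' D' =
   block_mat (A**A' + B**C') (A**B'+B**D') (C**A'+D**C') (C**B'+D**D')"
  unfolding block_mat_def matrix_matrix_mult_def
  by (auto simp: vec_eq_iff sum_UNIV_Plus o_def sum.distrib split: sum.split)

lemma block_transpose: "transpose (block_mat A B C D) = block_mat (transpose A) (transpose C) (transpose B) (transpose D)"
  unfolding block_mat_def transpose_def by (auto simp: vec_eq_iff split: sum.split)

lemma block_add: "block_mat A B C D + block_mat A' B' C' D' = block_mat (A+A') (B+B') (C+C') (D+D')"
  unfolding block_mat_def by (auto simp: vec_eq_iff split: sum.split)

lemma block_uminus: "- block_mat A B C D = block_mat (-A) (-B) (-C) (-D)"
  unfolding block_mat_def by (auto simp: vec_eq_iff split: sum.split)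

lemma block_diff: "block_mat A B C D - block_mat A' B' C' D' = block_mat (A-A') (B-B') (C-C') (D-D')"
  unfolding block_mat_def by (auto simp: vec_eq_iff split: sum.split)

lemma block_zero: "block_mat 0 0 0 0 = 0"
  unfolding block_mat_def by (auto simp: vec_eq_iff split: sum.split)

lemma cmat_block: "cmat (block_mat A B C D) = block_mat (cmat A) (cmat B) (cmat C) (cmat D)"
  unfolding block_mat_def cmat_def by (auto simp: vec_eq_iff split: sum.split)

lemma neg_mult_left: "(- A) ** (B::'a::ring_1^'n^'m) = - (A ** B)"
  by (simp add: matrix_matrix_mult_def vec_eq_iff sum_negf)
lemma neg_mult_right: "A ** (- (B::'a::ring_1^'n^'m)) = - (A ** B)"
  by (simp add: matrix_matrix_mult_def vec_eq_iff sum_negf)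
lemma add_mult_right: "(A + B) ** (C::'a::semiring_1^'n^'m) = A ** C + B ** C"
  by (simp add: matrix_matrix_mult_def vec_eq_iff sum.distrib distrib_right)
lemma diff_mult_right: "(A - B) ** (C::'a::ring_1^'n^'m) = A ** C - B ** C"
  by (simp add: matrix_matrix_mult_def vec_eq_iff sum_subtractf left_diff_distrib)
lemma diff_mult_left: "C ** (A - B) = C ** A - C ** (B::'a::ring_1^'n^'m)"
  by (simp add: matrix_matrix_mult_def vec_eq_iff sum_subtractf right_diff_distrib)
lemma transpose_neg: "transpose (- A) = - transpose A"
  by (simp add: transpose_def vec_eq_iff)
lemma transpose_add: "transpose (A + B) = transpose A + transpose B"
  by (simp add: transpose_def vec_eq_iff)
lemma transpose_diff: "transpose (A - B) = transpose A - transpose B"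
  by (simp add: transpose_def vec_eq_iff)
lemma transpose_zero: "transpose 0 = 0"
  by (simp add: transpose_def vec_eq_iff)

lemma mat1_block: "(mat 1 :: 'a::semiring_1^('n::finite+'n)^('n+'n)) = block_mat (mat 1) 0 0 (mat 1)"
  unfolding block_mat_def mat_def by (auto simp: vec_eq_iff split: sum.split)

definition diag :: "('n::finite \<Rightarrow> real) \<Rightarrow> real^'n^'n" where
  "diag d = (\<chi> i j. if i = j then d i else 0)"

lemma diag_mult: fixes a b :: "'n::finite \<Rightarrow> real" shows "diag a ** diag b = diag (\<lambda>i. a i * b i)"
proof -
  have "(\<Sum>k\<in>UNIV. (if i = k then a i else 0) * (if k = j then b k else 0)) = (if i = j then a i * b i else 0)" for i j :: 'n
  proof -
    have "(\<Sum>k\<in>UNIV. (if i = k then a i else 0) * (if k = j then b k else 0)) = (\<Sum>k\<in>UNIV. if k = i then a i * (if k = j then b k else 0) else 0)"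
      by (rule sum.cong) auto
    also have "\<dots> = a i * (if i = j then b i else 0)" by (subst sum.delta) auto 
    finally show ?thesis by simp
  qed
  then show ?thesis unfolding diag_def matrix_matrix_mult_def by (simp add: vec_eq_iff)
qed
lemma diag_add: "diag a + diag b = diag (\<lambda>i. a i + b i)"
  unfolding diag_def by (auto simp: vec_eq_iff)
lemma diag_transpose: "transpose (diag a) = diag a"
  unfolding diag_def transpose_def by (auto simp: vec_eq_iff)

lemma Gamma_block: "Gamma_mat g = block_mat (diag g) 0 0 (diag g)"
  unfolding Gamma_mat_def block_mat_def diag_def idx_def by (auto simp: vec_eq_iff split: sum.split)

lemma R_block: "sqrt2Gamma_mat g = block_mat (diag (\<lambda>i. sqrt (2 * g i))) 0 0 (diag (\<lambda>i. sqrt (2 * g i)))"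
  unfolding sqrt2Gamma_mat_def Gamma_mat_def block_mat_def diag_def idx_def by (auto simp: vec_eq_iff split: sum.split)

lemma J_block: "J_mat = block_mat 0 (mat 1) (- mat 1) 0"
  by (simp add: J_mat_def)

lemma cmat_mult: "cmat (A ** B) = cmat A ** cmat B"
  by (simp add: cmat_def matrix_matrix_mult_def vec_eq_iff)
lemma cmat_add: "cmat (A + B) = cmat A + cmat B"
  by (simp add: cmat_def vec_eq_iff)
lemma cmat_diff: "cmat (A - B) = cmat A - cmat B"
  by (simp add: cmat_def vec_eq_iff)
lemma cmat_neg: "cmat (- A) = - cmat A"
  by (simp add: cmat_def vec_eq_iff)

lemma ct_mult: "conj_transpose (A ** B) = conj_transpose B ** conj_transpose A"
  by (simp add: conj_transpose_def matrix_matrix_mult_def vec_eq_iff mult.commute)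
lemma ct_add: "conj_transpose (A + B) = conj_transpose A + conj_transpose B"
  by (simp add: conj_transpose_def vec_eq_iff)
lemma ct_diff: "conj_transpose (A - B) = conj_transpose A - conj_transpose B"
  by (simp add: conj_transpose_def vec_eq_iff)
lemma ct_mat: "conj_transpose (mat c) = mat (cnj c)"
  by (simp add: conj_transpose_def mat_def vec_eq_iff)
lemma ct_cmat: "conj_transpose (cmat A) = cmat (transpose A)"
  by (simp add: conj_transpose_def cmat_def transpose_def vec_eq_iff)

lemma mat_mult_left: "mat a ** X = (\<chi> i j. a * X$i$j)"
  unfolding matrix_matrix_mult_def mat_def
  by (auto simp: vec_eq_iff if_distrib if_distribR sum.delta cong: if_cong)
lemma mat_mult_right: "X ** mat a = (\<chi> i j. X$i$j * a)"
  unfolding matrix_matrix_mult_def mat_def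
  by (auto simp: vec_eq_iff if_distrib if_distribR sum.delta' cong: if_cong)

lemma ReGF_sym:
  assumes herm: "hermitian_mat G" and symm: "transpose F = F"
  shows "transpose (Re_mat (G+F)) = Re_mat (G+F)" "transpose (Re_mat (G-F)) = Re_mat (G-F)"
proof -
  have h0: "conj_transpose G $ i $ j = G $ i $ j" for i j using herm unfolding hermitian_mat_def by simp
  have h: "cnj (G$j$i) = G$i$j" for i j using h0[of i j] unfolding conj_transpose_def by simp
  have hr: "Re (G$j$i) = Re (G$i$j)" for i j using arg_cong[OF h[of i j], of Re] by simp
  have s0: "transpose F $ i $ j = F $ i $ j" for i j using symm by simp
  have s: "F$j$i = F$i$j" for i j using s0[of i j] unfolding transpose_def by simp
  have p1: "Re (G$j$i + F$j$i) = Re (G$i$j + F$i$j)" for i j using hr[of i j] s[of i j] by simp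
  have p2: "Re (G$j$i - F$j$i) = Re (G$i$j - F$i$j)" for i j using hr[of i j] s[of i j] by simp
  show "transpose (Re_mat (G+F)) = Re_mat (G+F)" "transpose (Re_mat (G-F)) = Re_mat (G-F)"
    unfolding transpose_def Re_mat_def vec_eq_iff using p1 p2 by simp_all
qed

lemma JM_sym:
  assumes herm: "hermitian_mat G" and symm: "transpose F = F"
  shows "transpose (J_mat ** M_mat G F) = J_mat ** M_mat G F"
  using ReGF_sym[OF herm symm]
  by (simp add: J_block M_mat_def block_mult block_transpose neg_mult_left transpose_neg transpose_zero)

lemma MJ:
  assumes herm: "hermitian_mat G" and symm: "transpose F = F"
  shows "M_mat G F ** J_mat + J_mat ** transpose (M_mat G F) = 0"
  using ReGF_sym[OF herm symm]
  by (simp add: J_block M_mat_def block_mult block_transpose neg_mult_left neg_mult_right transpose_neg transpose_zero block_add block_zero)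

lemma JG_skew: "transpose (J_mat ** Gamma_mat g) = - (J_mat ** Gamma_mat g)"
  by (simp add: J_block Gamma_block block_mult block_transpose neg_mult_left transpose_neg transpose_zero diag_transpose block_uminus)

lemma GJ: "Gamma_mat g ** J_mat = J_mat ** Gamma_mat g"
  by (simp add: J_block Gamma_block block_mult neg_mult_left neg_mult_right)

lemma RJ: "sqrt2Gamma_mat g ** J_mat = J_mat ** sqrt2Gamma_mat g"
  by (simp add: J_block R_block block_mult neg_mult_left neg_mult_right)

lemma RR: assumes "\<And>i. g i > 0" shows "sqrt2Gamma_mat g ** sqrt2Gamma_mat g = Gamma_mat g + Gamma_mat g"
proof -
  have e: "sqrt (2 * g i) * sqrt (2 * g i) = g i + g i" for i
    using assms[of i] by (simp add: abs_if)
  have d: "diag (\<lambda>i. sqrt (2 * g i)) ** diag (\<lambda>i. sqrt (2 * g i)) = diag g + diag g"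
    by (simp only: diag_mult diag_add e)
  show ?thesis by (simp only: R_block Gamma_block block_mult block_add d times0_left times0_right add_0_left add_0_right)
qed

lemma R_sym: "transpose (sqrt2Gamma_mat g) = sqrt2Gamma_mat g"
  by (simp add: R_block block_transpose diag_transpose transpose_zero)
lemma G_sym: "transpose (Gamma_mat g) = Gamma_mat g"
  by (simp add: Gamma_block block_transpose diag_transpose transpose_zero)

lemma key:
  fixes R J G2 K Ki Kh Kih :: "complex^'m::finite^'m"
  assumes KKi: "K ** Ki = mat 1" and KiK: "Ki ** K = mat 1"
    and Kh1: "Kh ** Kih = mat 1" and Kh2: "Kih ** Kh = mat 1"
    and RJ: "R ** J = J ** R" and RR: "R ** R = G2"
    and KJ: "K ** J + J ** Kh = G2 ** J" and G2J: "G2 ** J = J ** G2"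
  shows "(R ** Ki ** R - mat 1) ** J ** (R ** Kih ** R - mat 1) = J"
proof -
  have 1: "Ki ** (J ** G2) ** Kih = J ** Kih + Ki ** J"
  proof -
    have "Ki ** (J ** G2) ** Kih = Ki ** (K ** J + J ** Kh) ** Kih" using KJ G2J by simp
    also have "\<dots> = (Ki ** K) ** J ** Kih + Ki ** J ** (Kh ** Kih)"
      by (simp add: matrix_add_ldistrib add_mult_right matrix_mul_assoc)
    also have "\<dots> = J ** Kih + Ki ** J" using KiK Kh1 by simp
    finally show ?thesis .
  qed
  have 2: "R ** Ki ** R ** J ** R ** Kih ** R = J ** R ** Kih ** R + R ** Ki ** R ** J"
  proof -
    have "R ** Ki ** R ** J ** R ** Kih ** R = R ** (Ki ** (J ** (R ** R)) ** Kih) ** R"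
      using RJ by (simp add: matrix_mul_assoc) (metis matrix_mul_assoc)
    also have "\<dots> = R ** (J ** Kih + Ki ** J) ** R" using 1 RR by simp
    also have "\<dots> = (R ** J) ** Kih ** R + R ** Ki ** (J ** R)"
      by (simp add: matrix_add_ldistrib add_mult_right matrix_mul_assoc)
    also have "\<dots> = J ** R ** Kih ** R + R ** Ki ** R ** J"
    proof -
      have "R ** Ki ** (J ** R) = R ** Ki ** R ** J" using RJ by (metis matrix_mul_assoc)
      then show ?thesis using RJ by simp
    qed
    finally show ?thesis .
  qed
  have "(R ** Ki ** R - mat 1) ** J ** (R ** Kih ** R - mat 1)
      = R ** Ki ** R ** J ** R ** Kih ** R - R ** Ki ** R ** J - J ** R ** Kih ** R + J"
    by (simp add: diff_mult_left diff_mult_right matrix_mul_assoc algebra_simps)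
  also have "\<dots> = J" using 2 by simp
  finally show ?thesis .
qed

lemma ct_ct_cmat_mat1: "conj_transpose (mat 1 :: complex^'m^'m) = mat 1"
  by (simp add: ct_mat)

theorem mainTheorem2:
  fixes \<gamma> :: "'n::finite \<Rightarrow> real"
    and G F :: "complex^'n^'n"
  assumes gpos: "\<And>i. \<gamma> i > 0"
    and herm: "hermitian_mat G"
    and symm: "transpose F = F"
    and inv: "\<And>\<omega>::real. invertible (mat (\<i> * complex_of_real \<omega>) + cmat (Gamma_mat \<gamma>) - cmat (M_mat G F))"
  shows "transpose (J_mat ** M_mat G F) = J_mat ** M_mat G F
       \<and> transpose (J_mat ** Gamma_mat \<gamma>) = - (J_mat ** Gamma_mat \<gamma>)
       \<and> (\<forall>\<omega>::real. S_mat \<gamma> G F \<omega> ** cmat J_mat ** conj_transpose (S_mat \<gamma> G F \<omega>) = cmat J_mat)"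
proof (intro conjI allI)
  show "transpose (J_mat ** M_mat G F) = J_mat ** M_mat G F" using JM_sym[OF herm symm] .
  show "transpose (J_mat ** Gamma_mat \<gamma>) = - (J_mat ** Gamma_mat \<gamma>)" by (rule JG_skew)
  fix \<omega> :: real
  define a where "a = \<i> * complex_of_real \<omega>"
  define K where "K = mat a + cmat (Gamma_mat \<gamma>) - cmat (M_mat G F)"
  define Ki where "Ki = matrix_inv K"
  define Rc where "Rc = cmat (sqrt2Gamma_mat \<gamma>)"
  define Jc where "Jc = cmat (J_mat :: real^('n+'n)^('n+'n))"
  define Gm where "Gm = (Gamma_mat \<gamma>)"
  define M where "M = M_mat G F"
  have invK: "K ** Ki = mat 1 \<and> Ki ** K = mat 1"
    using someI_ex[OF inv[of \<omega>, unfolded invertible_def]]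
    unfolding Ki_def K_def a_def matrix_inv_def by simp
  have ctK: "conj_transpose K = mat (cnj a) + cmat Gm - cmat (transpose M)"
    unfolding K_def Gm_def M_def by (simp add: ct_add ct_diff ct_mat ct_cmat G_sym)
  have Kh1: "conj_transpose K ** conj_transpose Ki = mat 1"
    using invK by (metis ct_mult ct_ct_cmat_mat1)
  have Kh2: "conj_transpose Ki ** conj_transpose K = mat 1"
    using invK by (metis ct_mult ct_ct_cmat_mat1)
  have RJc: "Rc ** Jc = Jc ** Rc" unfolding Rc_def Jc_def by (simp add: cmat_mult[symmetric] RJ)
  have RRc: "Rc ** Rc = cmat (Gm + Gm)" unfolding Rc_def Gm_def by (simp add: cmat_mult[symmetric] RR[OF gpos])
  have G2J: "cmat (Gm + Gm) ** Jc = Jc ** cmat (Gm + Gm)"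
  proof -
    have "(Gm + Gm) ** J_mat = J_mat ** (Gm + Gm)"
      unfolding Gm_def by (simp only: add_mult_right matrix_add_ldistrib GJ)
    then show ?thesis unfolding Jc_def by (simp only: cmat_mult[symmetric])
  qed
  have z: "mat a ** Jc + Jc ** mat (cnj a) = 0"
    by (simp add: mat_mult_left mat_mult_right vec_eq_iff a_def algebra_simps)
  have r: "Gm ** J_mat + J_mat ** Gm - (M ** J_mat + J_mat ** transpose M) = (Gm + Gm) ** J_mat"
  proof -
    have "Gm ** J_mat + J_mat ** Gm = (Gm + Gm) ** J_mat"
      unfolding Gm_def by (simp only: add_mult_right GJ)
    then show ?thesis unfolding M_def using MJ[OF herm symm] by (simp only: diff_zero)
  qed
  have KJ: "K ** Jc + Jc ** conj_transpose K = cmat (Gm + Gm) ** Jc"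
  proof -
    have "K ** Jc + Jc ** conj_transpose K = (mat a ** Jc + Jc ** mat (cnj a))
       + cmat (Gm ** J_mat + J_mat ** Gm - (M ** J_mat + J_mat ** transpose M))"
      unfolding ctK unfolding K_def Jc_def Gm_def M_def
      by (simp add: add_mult_right diff_mult_right matrix_add_ldistrib diff_mult_left
          cmat_mult cmat_add cmat_diff algebra_simps)
    also have "\<dots> = cmat (Gm + Gm) ** Jc" using z r unfolding Jc_def by (simp add: cmat_mult)
    finally show ?thesis .
  qed
  have ctS: "conj_transpose (S_mat \<gamma> G F \<omega>) = Rc ** conj_transpose Ki ** Rc - mat 1"
    unfolding S_mat_def Rc_def Ki_def K_def a_def
    by (simp add: ct_diff ct_mult ct_mat ct_cmat R_sym matrix_mul_assoc)
  have S: "S_mat \<gamma> G F \<omega> = Rc ** Ki ** Rc - mat 1"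
    unfolding S_mat_def Rc_def Ki_def K_def a_def by simp
  show "S_mat \<gamma> G F \<omega> ** cmat J_mat ** conj_transpose (S_mat \<gamma> G F \<omega>) = cmat J_mat"
    unfolding ctS unfolding S Jc_def[symmetric]
    by (rule key[OF conjunct1[OF invK] conjunct2[OF invK] Kh1 Kh2 RJc RRc KJ G2J])
qed

end
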